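(* Suppose the family of sets $\{\tau^{(n)}_{r,s}(B(r,n)):n\ge1,\ 1\le r\le m_n,\ 1\le s\le k(r,n)\}$ is a basis for the topology of $X$. For $n\ge1$ let $\widetilde C(U_n,\mathbb Z)=\{f\in C(U_n,\mathbb Z): f \text{ is constant on } B(r,n) \text{ for each } 1\le r\le m_n\}$. Then the connecting maps $\phi_n$ map $\widetilde C(U_n,\mathbb Z)$ into $\widetilde C(U_{n+1},\mathbb Z)$, and the inclusions $\widetilde C(U_n,\mathbb Z)\subseteq C(U_n,\mathbb Z)$ induce a group isomorphism $$\varinjlim\big(\widetilde C(U_n,\mathbb Z),\phi_n|_{\widetilde C(U_n,\mathbb Z)}\big)\cong\varinjlim\big(C(U_n,\mathbb Z),\phi_n\big).$$
   Context: Let $X$ be a compact metrizable space having a basis of clopen sets. A partial homeomorphism of $X$ is a homeomorphism $\sigma:\mathrm{Dom}(\sigma)\to\mathrm{Ran}(\sigma)$ between clopen subsets of $X$. The composition $\rho\circ\sigma$ has domain $\sigma^{-1}(\mathrm{Ran}(\sigma)\cap\mathrm{Dom}(\rho))$. Data: positive integers $m_n$ ($n\ge1$), $m_0=1$; for each $n\ge1$ and $1\le r\le m_n$ a nonempty clopen set $B(r,n)\subseteq X$, such that for fixed $n$ the sets $B(1,n),\dots,B(m_n,n)$ are pairwise disjoint, a positive integer $\kappa(r,n)$, and partial homeomorphisms $\sigma^{(n)}_{r,s}$ ($1\le s\le\kappa(r,n)$) with $\mathrm{Dom}(\sigma^{(n)}_{r,s})=B(r,n)$. Put $U_n=\bigcup_{r=1}^{m_n}B(r,n)$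 for $n\ge1$ and $U_0=B(1,0)=X$. Standing conditions, for every $n\ge1$: (i) $\sigma^{(n)}_{r,1}$ is the identity map of $B(r,n)$ for all $r$; (ii) for all $r,s$ there is $i\in\{1,\dots,m_{n-1}\}$ with $\sigma^{(n)}_{r,s}(B(r,n))\subseteq B(i,n-1)$; (iii) the sets $\sigma^{(n)}_{r,s}(B(r,n))$ ($1\le r\le m_n$, $1\le s\le\kappa(r,n)$) are pairwise disjoint and their union is $U_{n-1}$. For $n\ge1$ and $1\le r\le m_n$ let $\tau^{(n)}_{r,1},\dots,\tau^{(n)}_{r,k(r,n)}$ enumerate the partial homeomorphisms $\sigma^{(1)}_{r_1,s_1}\circ\cdots\circ\sigma^{(n)}_{r_n,s_n}$ over all index sequences with $r_n=r$ and $\sigma^{(j)}_{r_j,s_j}(B(r_j,j))\subseteq B(r_{j-1},j-1)$ for $2\le j\le n$ (each has domain $B(r,n)$). $C(U_n,\mathbb Z)$ is the group of continuous integer-valued functions on $U_n$, and $\phi_n:C(U_n,\mathbb Z)\to C(U_{n+1},\mathbb Z)$ is the homomorphism defined, for $x\in B(r,n+1)$, by $\phi_n(\xi)(x)=\sum_{s=1}^{\kappa(r,n+1)}\xi(\sigma^{(n+1)}_{r,s}(x))$. *)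

theory Defs
  imports "HOL-Analysis.Analysis" "HOL-Library.Function_Algebras"
begin

text \<open>Data: m n (n \<ge> 1), B n r (the set B(r,n)), kappa n r, sigma n r s (the partial
homeomorphism sigma^(n)_{r,s}, as a total map whose values outside B n r are irrelevant).\<close>

definition mm :: "(nat \<Rightarrow> nat) \<Rightarrow> nat \<Rightarrow> nat" where
  "mm m n = (if n = 0 then 1 else m n)"

definition BB :: "(nat \<Rightarrow> nat \<Rightarrow> 'a set) \<Rightarrow> nat \<Rightarrow> nat \<Rightarrow> 'a set" where
  "BB B n r = (if n = 0 then UNIV else B n r)"

definition UU :: "(nat \<Rightarrow> nat) \<Rightarrow> (nat \<Rightarrow> nat \<Rightarrow> 'a set) \<Rightarrow> nat \<Rightarrow> 'a set" where
  "UU m B n = (\<Union>r\<in>{1..mm m n}. BB B n r)"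

definition clopen_set :: "'a::topological_space set \<Rightarrow> bool" where
  "clopen_set S \<longleftrightarrow> open S \<and> closed S"

definition partial_homeo :: "'a::topological_space set \<Rightarrow> ('a \<Rightarrow> 'a) \<Rightarrow> bool" where
  "partial_homeo D f \<longleftrightarrow> clopen_set D \<and> clopen_set (f ` D) \<and>
     (\<exists>g. homeomorphism D (f ` D) f g)"

definition admissible ::
  "(nat \<Rightarrow> nat) \<Rightarrow> (nat \<Rightarrow> nat \<Rightarrow> 'a set) \<Rightarrow> (nat \<Rightarrow> nat \<Rightarrow> nat) \<Rightarrow>
   (nat \<Rightarrow> nat \<Rightarrow> nat \<Rightarrow> 'a \<Rightarrow> 'a) \<Rightarrow> nat \<Rightarrow> (nat \<Rightarrow> nat) \<Rightarrow> (nat \<Rightarrow> nat) \<Rightarrow> bool" where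
  "admissible m B \<kappa> \<sigma> n rs ss \<longleftrightarrow>
     (\<forall>j\<in>{1..n}. rs j \<in> {1..m j} \<and> ss j \<in> {1..\<kappa> j (rs j)}) \<and>
     (\<forall>j\<in>{2..n}. \<sigma> j (rs j) (ss j) ` B j (rs j) \<subseteq> B (j - 1) (rs (j - 1)))"

fun tau_comp :: "(nat \<Rightarrow> nat \<Rightarrow> nat \<Rightarrow> 'a \<Rightarrow> 'a) \<Rightarrow> nat \<Rightarrow> (nat \<Rightarrow> nat) \<Rightarrow> (nat \<Rightarrow> nat) \<Rightarrow> 'a \<Rightarrow> 'a" where
  "tau_comp \<sigma> 0 rs ss = id"
| "tau_comp \<sigma> (Suc n) rs ss = tau_comp \<sigma> n rs ss \<circ> \<sigma> (Suc n) (rs (Suc n)) (ss (Suc n))"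

definition tau_family ::
  "(nat \<Rightarrow> nat) \<Rightarrow> (nat \<Rightarrow> nat \<Rightarrow> 'a set) \<Rightarrow> (nat \<Rightarrow> nat \<Rightarrow> nat) \<Rightarrow>
   (nat \<Rightarrow> nat \<Rightarrow> nat \<Rightarrow> 'a \<Rightarrow> 'a) \<Rightarrow> 'a set set" where
  "tau_family m B \<kappa> \<sigma> = {tau_comp \<sigma> n rs ss ` B n (rs n) | n rs ss.
       n \<ge> 1 \<and> admissible m B \<kappa> \<sigma> n rs ss}"

text \<open>C(U_n,Z): continuous integer functions on U_n, represented canonically as
functions on the whole space vanishing outside U_n.\<close>
definition CU :: "(nat \<Rightarrow> nat) \<Rightarrow> (nat \<Rightarrow> nat \<Rightarrow> 'a::topological_space set) \<Rightarrow> nat \<Rightarrow> ('a \<Rightarrow> int) set" where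
  "CU m B n = {f. continuous_on (UU m B n) f \<and> (\<forall>x. x \<notin> UU m B n \<longrightarrow> f x = 0)}"

definition CUt :: "(nat \<Rightarrow> nat) \<Rightarrow> (nat \<Rightarrow> nat \<Rightarrow> 'a::topological_space set) \<Rightarrow> nat \<Rightarrow> ('a \<Rightarrow> int) set" where
  "CUt m B n = {f \<in> CU m B n. \<forall>r\<in>{1..m n}. \<exists>c. \<forall>x\<in>B n r. f x = c}"

definition phi ::
  "(nat \<Rightarrow> nat) \<Rightarrow> (nat \<Rightarrow> nat \<Rightarrow> 'a set) \<Rightarrow> (nat \<Rightarrow> nat \<Rightarrow> nat) \<Rightarrow>
   (nat \<Rightarrow> nat \<Rightarrow> nat \<Rightarrow> 'a \<Rightarrow> 'a) \<Rightarrow> nat \<Rightarrow> ('a \<Rightarrow> int) \<Rightarrow> 'a \<Rightarrow> int" where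
  "phi m B \<kappa> \<sigma> n \<xi> x = (\<Sum>r = 1..m (Suc n). if x \<in> B (Suc n) r
       then (\<Sum>s = 1..\<kappa> (Suc n) r. \<xi> (\<sigma> (Suc n) r s x)) else 0)"

fun trans_map :: "(nat \<Rightarrow> 'g \<Rightarrow> 'g) \<Rightarrow> nat \<Rightarrow> nat \<Rightarrow> 'g \<Rightarrow> 'g" where
  "trans_map \<phi> n 0 x = x"
| "trans_map \<phi> n (Suc d) x = \<phi> (n + d) (trans_map \<phi> n d x)"

definition dl_rel :: "nat \<Rightarrow> (nat \<Rightarrow> 'g set) \<Rightarrow> (nat \<Rightarrow> 'g \<Rightarrow> 'g) \<Rightarrow> ((nat \<times> 'g) \<times> (nat \<times> 'g)) set" where
  "dl_rel n0 G \<phi> = {((n, x), (m, y)). n0 \<le> n \<and> n0 \<le> m \<and> x \<in> G n \<and> y \<in> G m \<and>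
      (\<exists>k. n \<le> k \<and> m \<le> k \<and> trans_map \<phi> n (k - n) x = trans_map \<phi> m (k - m) y)}"

definition dlim :: "nat \<Rightarrow> (nat \<Rightarrow> 'g set) \<Rightarrow> (nat \<Rightarrow> 'g \<Rightarrow> 'g) \<Rightarrow> (nat \<times> 'g) set set" where
  "dlim n0 G \<phi> = (SIGMA n:{n0..}. G n) // dl_rel n0 G \<phi>"

definition dl_add :: "nat \<Rightarrow> (nat \<Rightarrow> 'g::plus set) \<Rightarrow> (nat \<Rightarrow> 'g \<Rightarrow> 'g) \<Rightarrow>
    (nat \<times> 'g) set \<Rightarrow> (nat \<times> 'g) set \<Rightarrow> (nat \<times> 'g) set" where
  "dl_add n0 G \<phi> A C = (let (n, x) = (SOME p. p \<in> A); (m, y) = (SOME p. p \<in> C); k = max n m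
      in dl_rel n0 G \<phi> `` {(k, trans_map \<phi> n (k - n) x + trans_map \<phi> m (k - m) y)})"

text \<open>Map between direct limits induced by inclusions H n \<subseteq> G n (same connecting maps):
the class of (n,x) is sent to the class of (n,x).\<close>
definition dl_induced :: "nat \<Rightarrow> (nat \<Rightarrow> 'g set) \<Rightarrow> (nat \<Rightarrow> 'g \<Rightarrow> 'g) \<Rightarrow>
    (nat \<times> 'g) set \<Rightarrow> (nat \<times> 'g) set" where
  "dl_induced n0 G \<phi> A = dl_rel n0 G \<phi> `` A"

end

theory Submission
  imports Defs
begin


lemma trans_map_add_steps:
  "trans_map \<phi> n (a + b) x = trans_map \<phi> (n + a) b (trans_map \<phi> n a x)"
  by (induction b) (auto simp: add.assoc)

lemma trans_map_compose:
  assumes "n \<le> K" "K \<le> M"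
  shows "trans_map \<phi> K (M - K) (trans_map \<phi> n (K - n) x) = trans_map \<phi> n (M - n) x"
proof -
  have "M - n = (K - n) + (M - K)" using assms by simp
  then show ?thesis using trans_map_add_steps[of \<phi> n "K - n" "M - K" x] assms by simp
qed

lemma trans_map_eq_later:
  assumes "n \<le> k" "n' \<le> k" "k \<le> M"
    and "trans_map \<phi> n (k - n) x = trans_map \<phi> n' (k - n') x'"
  shows "trans_map \<phi> n (M - n) x = trans_map \<phi> n' (M - n') x'"
proof -
  have "trans_map \<phi> n (M - n) x = trans_map \<phi> k (M - k) (trans_map \<phi> n (k - n) x)"
    using trans_map_compose[of n k M \<phi> x] assms by simp
  also have "\<dots> = trans_map \<phi> k (M - k) (trans_map \<phi> n' (k - n') x')" using assms(4) by simp
  also have "\<dots> = trans_map \<phi> n' (M - n') x'"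
    using trans_map_compose[of n' k M \<phi> x'] assms by simp
  finally show ?thesis .
qed

lemma trans_map_additive:
  assumes "\<And>n x y. \<phi> n (x + y) = \<phi> n x + \<phi> n y"
  shows "trans_map \<phi> n d (x + y) = trans_map \<phi> n d x + trans_map \<phi> n d y"
  by (induction d) (auto simp: assms)

lemma trans_map_pres:
  assumes "\<And>k x. k \<ge> n0 \<Longrightarrow> x \<in> G k \<Longrightarrow> \<phi> k x \<in> G (Suc k)" "n \<ge> n0" "x \<in> G n"
  shows "trans_map \<phi> n d x \<in> G (n + d)"
  by (induction d) (use assms in auto)

lemma dl_equiv: "equiv (SIGMA n:{n0..}. G n) (dl_rel n0 G \<phi>)"
proof (rule equivI)
  show "dl_rel n0 G \<phi> \<subseteq> (SIGMA n:{n0..}. G n) \<times> (SIGMA n:{n0..}. G n)"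
  proof (rule subsetI)
    fix p assume p: "p \<in> dl_rel n0 G \<phi>"
    obtain n x m y where "p = ((n, x), (m, y))" by (metis prod.collapse)
    with p show "p \<in> (SIGMA n:{n0..}. G n) \<times> (SIGMA n:{n0..}. G n)" by (auto simp: dl_rel_def)
  qed
  show "refl_on (SIGMA n:{n0..}. G n) (dl_rel n0 G \<phi>)"
    unfolding refl_on_def
  proof (intro ballI)
    fix a assume a: "a \<in> (SIGMA n:{n0..}. G n)"
    obtain n x where "a = (n, x)" by (cases a)
    with a show "(a, a) \<in> dl_rel n0 G \<phi>" by (auto simp: dl_rel_def)
  qed
  show "sym (dl_rel n0 G \<phi>)"
    unfolding sym_def dl_rel_def by auto
  show "trans (dl_rel n0 G \<phi>)"
  proof (rule transI)
    fix a b c assume ab: "(a, b) \<in> dl_rel n0 G \<phi>" and bc: "(b, c) \<in> dl_rel n0 G \<phi>"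
    obtain n x m y p z where abc: "a = (n, x)" "b = (m, y)" "c = (p, z)" by (cases a, cases b, cases c) auto
    from ab obtain k1 where k1: "n \<le> k1" "m \<le> k1" "trans_map \<phi> n (k1 - n) x = trans_map \<phi> m (k1 - m) y"
      "n0 \<le> n" "x \<in> G n" unfolding abc dl_rel_def by auto
    from bc obtain k2 where k2: "m \<le> k2" "p \<le> k2" "trans_map \<phi> m (k2 - m) y = trans_map \<phi> p (k2 - p) z"
      "n0 \<le> p" "z \<in> G p" unfolding abc dl_rel_def by auto
    let ?M = "max k1 k2"
    have "trans_map \<phi> n (?M - n) x = trans_map \<phi> m (?M - m) y"
      by (rule trans_map_eq_later[OF _ _ _ k1(3)]) (use k1 in auto)
    also have "\<dots> = trans_map \<phi> p (?M - p) z"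
      by (rule trans_map_eq_later[OF _ _ _ k2(3)]) (use k2 in auto)
    finally show "(a, c) \<in> dl_rel n0 G \<phi>" unfolding abc dl_rel_def using k1 k2
      by (auto intro!: exI[of _ ?M])
  qed
qed

lemma dl_rel_mono:
  assumes "\<And>n. H n \<subseteq> G n"
  shows "dl_rel n0 H \<phi> \<subseteq> dl_rel n0 G \<phi>"
  using assms unfolding dl_rel_def by blast

lemma dl_rel_restrict:
  assumes "(a, b) \<in> dl_rel n0 G \<phi>" "a \<in> (SIGMA n:{n0..}. H n)" "b \<in> (SIGMA n:{n0..}. H n)"
  shows "(a, b) \<in> dl_rel n0 H \<phi>"
  using assms unfolding dl_rel_def by auto

lemma dl_induced_class:
  assumes "\<And>n. H n \<subseteq> G n" "a \<in> (SIGMA n:{n0..}. H n)"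
  shows "dl_induced n0 G \<phi> (dl_rel n0 H \<phi> `` {a}) = dl_rel n0 G \<phi> `` {a}"
proof -
  have eqG: "equiv (SIGMA n:{n0..}. G n) (dl_rel n0 G \<phi>)" by (rule dl_equiv)
  have eqH: "equiv (SIGMA n:{n0..}. H n) (dl_rel n0 H \<phi>)" by (rule dl_equiv)
  have aH: "a \<in> dl_rel n0 H \<phi> `` {a}" using eqH assms(2) by (meson equiv_class_self)
  show ?thesis unfolding dl_induced_def
  proof
    show "dl_rel n0 G \<phi> `` {a} \<subseteq> dl_rel n0 G \<phi> `` (dl_rel n0 H \<phi> `` {a})" using aH by blast
    show "dl_rel n0 G \<phi> `` (dl_rel n0 H \<phi> `` {a}) \<subseteq> dl_rel n0 G \<phi> `` {a}"
    proof
      fix c assume "c \<in> dl_rel n0 G \<phi> `` (dl_rel n0 H \<phi> `` {a})"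
      then obtain b where ab: "(a, b) \<in> dl_rel n0 H \<phi>" and bc: "(b, c) \<in> dl_rel n0 G \<phi>" by auto
      have "(a, b) \<in> dl_rel n0 G \<phi>" using ab dl_rel_mono[of H G n0 \<phi>, OF assms(1)] by blast
      have tr: "trans (dl_rel n0 G \<phi>)" using eqG by (simp add: equiv_def)
      have "(a, c) \<in> dl_rel n0 G \<phi>" by (rule transD[OF tr \<open>(a, b) \<in> dl_rel n0 G \<phi>\<close> bc])
      then show "c \<in> dl_rel n0 G \<phi> `` {a}" by auto
    qed
  qed
qed

lemma dlim_elem:
  assumes "A \<in> dlim n0 G \<phi>"
  obtains a where "a \<in> (SIGMA n:{n0..}. G n)" "A = dl_rel n0 G \<phi> `` {a}"
  using assms unfolding dlim_def by (auto elim!: quotientE)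

lemma dlim_some:
  assumes "A \<in> dlim n0 G \<phi>"
  shows "(SOME p. p \<in> A) \<in> A" "(SOME p. p \<in> A) \<in> (SIGMA n:{n0..}. G n)"
    "A = dl_rel n0 G \<phi> `` {SOME p. p \<in> A}"
proof -
  have eq: "equiv (SIGMA n:{n0..}. G n) (dl_rel n0 G \<phi>)" by (rule dl_equiv)
  obtain a where a: "a \<in> (SIGMA n:{n0..}. G n)" "A = dl_rel n0 G \<phi> `` {a}" using dlim_elem[OF assms] .
  have "a \<in> A" using a eq by (meson equiv_class_self)
  then show 1: "(SOME p. p \<in> A) \<in> A" by (meson someI)
  then have ap: "(a, SOME p. p \<in> A) \<in> dl_rel n0 G \<phi>" using a by auto
  show "(SOME p. p \<in> A) \<in> (SIGMA n:{n0..}. G n)"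
    by (rule SigmaD2[OF subsetD[OF equiv_type[OF eq] ap]])
  show "A = dl_rel n0 G \<phi> `` {SOME p. p \<in> A}"
    using a(2) equiv_class_eq[OF eq ap] by simp
qed

lemma dl_bij:
  assumes HG: "\<And>n. H n \<subseteq> G n"
    and surj: "\<And>n x. n \<ge> n0 \<Longrightarrow> x \<in> G n \<Longrightarrow> \<exists>k\<ge>n. trans_map \<phi> n (k - n) x \<in> H k"
  shows "bij_betw (dl_induced n0 G \<phi>) (dlim n0 H \<phi>) (dlim n0 G \<phi>)"
proof -
  have eqG: "equiv (SIGMA n:{n0..}. G n) (dl_rel n0 G \<phi>)" by (rule dl_equiv)
  have eqH: "equiv (SIGMA n:{n0..}. H n) (dl_rel n0 H \<phi>)" by (rule dl_equiv)
  have SHG: "(SIGMA n:{n0..}. H n) \<subseteq> (SIGMA n:{n0..}. G n)" using HG by auto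
  show ?thesis unfolding bij_betw_def
  proof (intro conjI)
    show "inj_on (dl_induced n0 G \<phi>) (dlim n0 H \<phi>)"
    proof (rule inj_onI)
      fix A A' assume A: "A \<in> dlim n0 H \<phi>" and A': "A' \<in> dlim n0 H \<phi>"
        and e: "dl_induced n0 G \<phi> A = dl_induced n0 G \<phi> A'"
      obtain a where a: "a \<in> (SIGMA n:{n0..}. H n)" "A = dl_rel n0 H \<phi> `` {a}" using dlim_elem[OF A] .
      obtain b where b: "b \<in> (SIGMA n:{n0..}. H n)" "A' = dl_rel n0 H \<phi> `` {b}" using dlim_elem[OF A'] .
      have "dl_rel n0 G \<phi> `` {a} = dl_rel n0 G \<phi> `` {b}"
        using e dl_induced_class[OF HG a(1)] dl_induced_class[OF HG b(1)] a b by simp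
      then have "(a, b) \<in> dl_rel n0 G \<phi>" using eqG a(1) b(1) SHG
        by (meson equiv_class_eq_iff subsetD)
      then have "(a, b) \<in> dl_rel n0 H \<phi>" using dl_rel_restrict a b by blast
      then show "A = A'" using a b eqH by (simp add: equiv_class_eq)
    qed
    show "dl_induced n0 G \<phi> ` dlim n0 H \<phi> = dlim n0 G \<phi>"
    proof
      show "dl_induced n0 G \<phi> ` dlim n0 H \<phi> \<subseteq> dlim n0 G \<phi>"
      proof
        fix C assume "C \<in> dl_induced n0 G \<phi> ` dlim n0 H \<phi>"
        then obtain A where A: "A \<in> dlim n0 H \<phi>" "C = dl_induced n0 G \<phi> A" by auto
        obtain a where a: "a \<in> (SIGMA n:{n0..}. H n)" "A = dl_rel n0 H \<phi> `` {a}" using dlim_elem[OF A(1)] .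
        have "C = dl_rel n0 G \<phi> `` {a}" using A a dl_induced_class[OF HG a(1)] by simp
        then show "C \<in> dlim n0 G \<phi>" unfolding dlim_def using a(1) SHG by (auto intro: quotientI)
      qed
      show "dlim n0 G \<phi> \<subseteq> dl_induced n0 G \<phi> ` dlim n0 H \<phi>"
      proof
        fix C assume C: "C \<in> dlim n0 G \<phi>"
        obtain a where a: "a \<in> (SIGMA n:{n0..}. G n)" "C = dl_rel n0 G \<phi> `` {a}" using dlim_elem[OF C] .
        obtain n x where nx: "a = (n, x)" by (cases a)
        then have n: "n \<ge> n0" "x \<in> G n" using a by auto
        obtain k where k: "k \<ge> n" "trans_map \<phi> n (k - n) x \<in> H k" using surj[OF n] by blast
        let ?b = "(k, trans_map \<phi> n (k - n) x)"
        have bH: "?b \<in> (SIGMA n:{n0..}. H n)" using k n by auto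
        have "(a, ?b) \<in> dl_rel n0 G \<phi>" unfolding nx dl_rel_def using k n HG
          by (auto intro!: exI[of _ k])
        then have "C = dl_rel n0 G \<phi> `` {?b}" using a eqG by (simp add: equiv_class_eq)
        also have "\<dots> = dl_induced n0 G \<phi> (dl_rel n0 H \<phi> `` {?b})"
          using dl_induced_class[OF HG bH] by simp
        finally show "C \<in> dl_induced n0 G \<phi> ` dlim n0 H \<phi>"
          using bH unfolding dlim_def by (auto intro: quotientI)
      qed
    qed
  qed
qed


lemma dl_add_compat:
  fixes \<phi> :: "nat \<Rightarrow> 'g::plus \<Rightarrow> 'g"
  assumes HG: "\<And>n. H n \<subseteq> G n"
    and add: "\<And>n x y. \<phi> n (x + y) = \<phi> n x + \<phi> n y"
    and presH: "\<And>k x. k \<ge> n0 \<Longrightarrow> x \<in> H k \<Longrightarrow> \<phi> k x \<in> H (Suc k)"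
    and presG: "\<And>k x. k \<ge> n0 \<Longrightarrow> x \<in> G k \<Longrightarrow> \<phi> k x \<in> G (Suc k)"
    and addH: "\<And>k x y. k \<ge> n0 \<Longrightarrow> x \<in> H k \<Longrightarrow> y \<in> H k \<Longrightarrow> x + y \<in> H k"
    and addG: "\<And>k x y. k \<ge> n0 \<Longrightarrow> x \<in> G k \<Longrightarrow> y \<in> G k \<Longrightarrow> x + y \<in> G k"
    and A: "A \<in> dlim n0 H \<phi>" and A': "A' \<in> dlim n0 H \<phi>"
  shows "dl_induced n0 G \<phi> (dl_add n0 H \<phi> A A') =
         dl_add n0 G \<phi> (dl_induced n0 G \<phi> A) (dl_induced n0 G \<phi> A')"
proof -
  have eqG: "equiv (SIGMA n:{n0..}. G n) (dl_rel n0 G \<phi>)" by (rule dl_equiv)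
  have SHG: "(SIGMA n:{n0..}. H n) \<subseteq> (SIGMA n:{n0..}. G n)" using HG by auto
  obtain n x where p: "(SOME p. p \<in> A) = (n, x)" by (metis prod.collapse)
  obtain m y where q: "(SOME p. p \<in> A') = (m, y)" by (metis prod.collapse)
  have pS: "(n, x) \<in> (SIGMA n:{n0..}. H n)" and Aeq: "A = dl_rel n0 H \<phi> `` {(n, x)}"
    using dlim_some[OF A] p by auto
  have qS: "(m, y) \<in> (SIGMA n:{n0..}. H n)" and A'eq: "A' = dl_rel n0 H \<phi> `` {(m, y)}"
    using dlim_some[OF A'] q by auto
  have n: "n \<ge> n0" "x \<in> H n" using pS by auto
  have m: "m \<ge> n0" "y \<in> H m" using qS by auto
  define K where "K = max n m"
  define z where "z = trans_map \<phi> n (K - n) x + trans_map \<phi> m (K - m) y"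
  have "trans_map \<phi> n (K - n) x \<in> H (n + (K - n))" by (rule trans_map_pres[OF presH n])
  moreover have "trans_map \<phi> m (K - m) y \<in> H (m + (K - m))" by (rule trans_map_pres[OF presH m])
  ultimately have zH: "z \<in> H K" unfolding z_def using addH[of K] n m by (simp add: K_def)
  have zS: "(K, z) \<in> (SIGMA n:{n0..}. H n)" using zH n by (simp add: K_def)
  have "dl_add n0 H \<phi> A A' = dl_rel n0 H \<phi> `` {(K, z)}"
    by (simp add: dl_add_def p q Let_def K_def z_def)
  then have L: "dl_induced n0 G \<phi> (dl_add n0 H \<phi> A A') = dl_rel n0 G \<phi> `` {(K, z)}"
    using dl_induced_class[OF HG zS] by simp
  define CA where "CA = dl_rel n0 G \<phi> `` {(n, x)}"
  define CB where "CB = dl_rel n0 G \<phi> `` {(m, y)}"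
  have IA: "dl_induced n0 G \<phi> A = CA" unfolding CA_def Aeq using dl_induced_class[OF HG pS] .
  have IB: "dl_induced n0 G \<phi> A' = CB" unfolding CB_def A'eq using dl_induced_class[OF HG qS] .
  have CAd: "CA \<in> dlim n0 G \<phi>" unfolding CA_def dlim_def using pS SHG by (auto intro: quotientI)
  have CBd: "CB \<in> dlim n0 G \<phi>" unfolding CB_def dlim_def using qS SHG by (auto intro: quotientI)
  obtain n' x' where p': "(SOME p. p \<in> CA) = (n', x')" by (metis prod.collapse)
  obtain m' y' where q': "(SOME p. p \<in> CB) = (m', y')" by (metis prod.collapse)
  have "(n', x') \<in> CA" using dlim_some(1)[OF CAd] p' by simp
  then have r1: "((n, x), (n', x')) \<in> dl_rel n0 G \<phi>" unfolding CA_def by simp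
  have "(m', y') \<in> CB" using dlim_some(1)[OF CBd] q' by simp
  then have r2: "((m, y), (m', y')) \<in> dl_rel n0 G \<phi>" unfolding CB_def by simp
  define K' where "K' = max n' m'"
  define z' where "z' = trans_map \<phi> n' (K' - n') x' + trans_map \<phi> m' (K' - m') y'"
  have "dl_add n0 G \<phi> CA CB = dl_rel n0 G \<phi> `` {(K', z')}"
    by (simp add: dl_add_def p' q' Let_def K'_def z'_def)
  then have R: "dl_add n0 G \<phi> (dl_induced n0 G \<phi> A) (dl_induced n0 G \<phi> A') = dl_rel n0 G \<phi> `` {(K', z')}"
    using IA IB by simp
  from r1 obtain k1 where k1: "n \<le> k1" "n' \<le> k1" "trans_map \<phi> n (k1 - n) x = trans_map \<phi> n' (k1 - n') x'"
    "n' \<ge> n0" "x' \<in> G n'" unfolding dl_rel_def by auto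
  from r2 obtain k2 where k2: "m \<le> k2" "m' \<le> k2" "trans_map \<phi> m (k2 - m) y = trans_map \<phi> m' (k2 - m') y'"
    "m' \<ge> n0" "y' \<in> G m'" unfolding dl_rel_def by auto
  have "trans_map \<phi> n' (K' - n') x' \<in> G (n' + (K' - n'))" by (rule trans_map_pres[OF presG k1(4,5)])
  moreover have "trans_map \<phi> m' (K' - m') y' \<in> G (m' + (K' - m'))" by (rule trans_map_pres[OF presG k2(4,5)])
  ultimately have z'G: "z' \<in> G K'" unfolding z'_def using addG[of K'] k1 k2 by (simp add: K'_def)
  define M where "M = max (max k1 k2) (max K K')"
  have le: "n \<le> K" "m \<le> K" "K \<le> M" "n' \<le> K'" "m' \<le> K'" "K' \<le> M" "k1 \<le> M" "k2 \<le> M"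
    by (auto simp: K_def K'_def M_def)
  have "trans_map \<phi> K (M - K) z = trans_map \<phi> K (M - K) (trans_map \<phi> n (K - n) x)
      + trans_map \<phi> K (M - K) (trans_map \<phi> m (K - m) y)"
    unfolding z_def by (rule trans_map_additive[OF add])
  also have "\<dots> = trans_map \<phi> n (M - n) x + trans_map \<phi> m (M - m) y"
    using trans_map_compose[OF le(1) le(3), of \<phi> x] trans_map_compose[OF le(2) le(3), of \<phi> y]
    by simp
  also have "\<dots> = trans_map \<phi> n' (M - n') x' + trans_map \<phi> m' (M - m') y'"
    using trans_map_eq_later[OF k1(1,2) le(7) k1(3)] trans_map_eq_later[OF k2(1,2) le(8) k2(3)]
    by simp
  also have "\<dots> = trans_map \<phi> K' (M - K') (trans_map \<phi> n' (K' - n') x')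
      + trans_map \<phi> K' (M - K') (trans_map \<phi> m' (K' - m') y')"
    using trans_map_compose[OF le(4) le(6), of \<phi> x'] trans_map_compose[OF le(5) le(6), of \<phi> y']
    by simp
  also have "\<dots> = trans_map \<phi> K' (M - K') z'"
    unfolding z'_def by (rule trans_map_additive[OF add, symmetric])
  finally have "((K, z), (K', z')) \<in> dl_rel n0 G \<phi>"
    unfolding dl_rel_def using zH HG z'G n k1 le by (auto simp: K_def K'_def intro!: exI[of _ M])
  then show ?thesis using L R equiv_class_eq[OF eqG] by simp
qed




fun cb :: "(nat \<Rightarrow> nat \<Rightarrow> nat \<Rightarrow> 'a \<Rightarrow> 'a) \<Rightarrow> nat \<Rightarrow> nat \<Rightarrow> (nat \<Rightarrow> nat) \<Rightarrow> (nat \<Rightarrow> nat) \<Rightarrow> 'a \<Rightarrow> 'a" where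
  "cb \<sigma> j 0 rs ss = id"
| "cb \<sigma> j (Suc d) rs ss = \<sigma> (Suc j) (rs (Suc j)) (ss (Suc j)) \<circ> cb \<sigma> (Suc j) d rs ss"

lemma tau_cb: "tau_comp \<sigma> (j + d) rs ss = tau_comp \<sigma> j rs ss \<circ> cb \<sigma> j d rs ss"
proof (induction d arbitrary: j)
  case 0
  then show ?case by simp
next
  case (Suc d)
  have "tau_comp \<sigma> (j + Suc d) rs ss = tau_comp \<sigma> (Suc j + d) rs ss" by simp
  also have "\<dots> = tau_comp \<sigma> (Suc j) rs ss \<circ> cb \<sigma> (Suc j) d rs ss" by (rule Suc.IH)
  also have "\<dots> = tau_comp \<sigma> j rs ss \<circ> cb \<sigma> j (Suc d) rs ss" by (simp add: o_assoc)
  finally show ?case .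
qed

lemma cb_cong:
  "(\<And>i. j < i \<Longrightarrow> i \<le> j + d \<Longrightarrow> rs i = rs' i \<and> ss i = ss' i) \<Longrightarrow>
   cb \<sigma> j d rs ss = cb \<sigma> j d rs' ss'"
proof (induction d arbitrary: j)
  case 0
  then show ?case by simp
next
  case (Suc d)
  have "cb \<sigma> (Suc j) d rs ss = cb \<sigma> (Suc j) d rs' ss'" by (rule Suc.IH) (use Suc.prems in auto)
  moreover have "rs (Suc j) = rs' (Suc j)" "ss (Suc j) = ss' (Suc j)" using Suc.prems[of "Suc j"] by auto
  ultimately show ?case by simp
qed

lemma tau_cong:
  "(\<And>i. 1 \<le> i \<Longrightarrow> i \<le> j \<Longrightarrow> rs i = rs' i \<and> ss i = ss' i) \<Longrightarrow>
   tau_comp \<sigma> j rs ss = tau_comp \<sigma> j rs' ss'"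
proof (induction j)
  case 0
  then show ?case by simp
next
  case (Suc j)
  have "tau_comp \<sigma> j rs ss = tau_comp \<sigma> j rs' ss'" by (rule Suc.IH) (use Suc.prems in auto)
  moreover have "rs (Suc j) = rs' (Suc j)" "ss (Suc j) = ss' (Suc j)" using Suc.prems[of "Suc j"] by auto
  ultimately show ?case by simp
qed

lemma cb_into:
  "(\<And>i. j < i \<Longrightarrow> i \<le> j + d \<Longrightarrow> \<sigma> i (rs i) (ss i) ` B i (rs i) \<subseteq> B (i - 1) (rs (i - 1))) \<Longrightarrow>
   x \<in> B (j + d) (rs (j + d)) \<Longrightarrow> cb \<sigma> j d rs ss x \<in> B j (rs j)"
proof (induction d arbitrary: j x)
  case 0
  then show ?case by simp
next
  case (Suc d)
  have "cb \<sigma> (Suc j) d rs ss x \<in> B (Suc j) (rs (Suc j))"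
    by (rule Suc.IH) (use Suc.prems in auto)
  moreover have "\<sigma> (Suc j) (rs (Suc j)) (ss (Suc j)) ` B (Suc j) (rs (Suc j)) \<subseteq> B j (rs j)"
    using Suc.prems(1)[of "Suc j"] by simp
  ultimately show ?case by auto
qed

lemma admissible_mono:
  "admissible m B \<kappa> \<sigma> k rs ss \<Longrightarrow> j \<le> k \<Longrightarrow> admissible m B \<kappa> \<sigma> j rs ss"
  unfolding admissible_def by auto

lemma const_ex: "(\<And>x y. x \<in> S \<Longrightarrow> y \<in> S \<Longrightarrow> g x = g y) \<Longrightarrow> \<exists>c. \<forall>x\<in>S. g x = c"
proof (cases "S = {}")
  case True
  then show ?thesis by simp
next
  case False
  then obtain x0 where "x0 \<in> S" by blast
  assume h: "\<And>x y. x \<in> S \<Longrightarrow> y \<in> S \<Longrightarrow> g x = g y"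
  show ?thesis by (rule exI[of _ "g x0"]) (use h \<open>x0 \<in> S\<close> in blast)
qed

lemma UU_pos: "n \<ge> 1 \<Longrightarrow> UU m B n = (\<Union>r\<in>{1..m n}. B n r)"
  by (simp add: UU_def mm_def BB_def)

lemma phi_add: "phi m B \<kappa> \<sigma> n (f + g) = phi m B \<kappa> \<sigma> n f + phi m B \<kappa> \<sigma> n g"
  apply (rule ext)
  apply (simp only: phi_def plus_fun_def sum.distrib[symmetric])
  apply (rule sum.cong)
   apply simp
  apply (simp add: sum.distrib)
  done

locale sysm =
  fixes m :: "nat \<Rightarrow> nat" and B :: "nat \<Rightarrow> nat \<Rightarrow> 'a::metric_space set"
    and \<kappa> :: "nat \<Rightarrow> nat \<Rightarrow> nat" and \<sigma> :: "nat \<Rightarrow> nat \<Rightarrow> nat \<Rightarrow> 'a \<Rightarrow> 'a"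
  assumes compact_X: "compact (UNIV :: 'a set)"
    and B_clopen: "\<And>n r. n \<ge> 1 \<Longrightarrow> r \<in> {1..m n} \<Longrightarrow> clopen_set (B n r)"
    and B_disj: "\<And>n r r'. n \<ge> 1 \<Longrightarrow> r \<in> {1..m n} \<Longrightarrow> r' \<in> {1..m n} \<Longrightarrow> r \<noteq> r' \<Longrightarrow>
                   B n r \<inter> B n r' = {}"
    and kappa_pos: "\<And>n r. n \<ge> 1 \<Longrightarrow> r \<in> {1..m n} \<Longrightarrow> \<kappa> n r \<ge> 1"
    and sigma_ph: "\<And>n r s. n \<ge> 1 \<Longrightarrow> r \<in> {1..m n} \<Longrightarrow> s \<in> {1..\<kappa> n r} \<Longrightarrow>
                   partial_homeo (B n r) (\<sigma> n r s)"
    and cond_i: "\<And>n r x. n \<ge> 1 \<Longrightarrow> r \<in> {1..m n} \<Longrightarrow> x \<in> B n r \<Longrightarrow> \<sigma> n r 1 x = x"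
    and cond_ii: "\<And>n r s. n \<ge> 1 \<Longrightarrow> r \<in> {1..m n} \<Longrightarrow> s \<in> {1..\<kappa> n r} \<Longrightarrow>
                   \<exists>i\<in>{1..mm m (n - 1)}. \<sigma> n r s ` B n r \<subseteq> BB B (n - 1) i"
    and cond_iii_disj: "\<And>n r s r' s'. n \<ge> 1 \<Longrightarrow> r \<in> {1..m n} \<Longrightarrow> s \<in> {1..\<kappa> n r} \<Longrightarrow>
                   r' \<in> {1..m n} \<Longrightarrow> s' \<in> {1..\<kappa> n r'} \<Longrightarrow> (r, s) \<noteq> (r', s') \<Longrightarrow>
                   \<sigma> n r s ` B n r \<inter> \<sigma> n r' s' ` B n r' = {}"
    and tau_basis: "topological_basis (tau_family m B \<kappa> \<sigma>)"
begin

lemma B_closed: "n \<ge> 1 \<Longrightarrow> r \<in> {1..m n} \<Longrightarrow> closed (B n r)"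
  using B_clopen by (simp add: clopen_set_def)

lemma B_open: "n \<ge> 1 \<Longrightarrow> r \<in> {1..m n} \<Longrightarrow> open (B n r)"
  using B_clopen by (simp add: clopen_set_def)

lemma sigma_cont: "n \<ge> 1 \<Longrightarrow> r \<in> {1..m n} \<Longrightarrow> s \<in> {1..\<kappa> n r} \<Longrightarrow> continuous_on (B n r) (\<sigma> n r s)"
proof -
  assume a: "n \<ge> 1" "r \<in> {1..m n}" "s \<in> {1..\<kappa> n r}"
  obtain g where "homeomorphism (B n r) (\<sigma> n r s ` B n r) (\<sigma> n r s) g"
    using sigma_ph[OF a(1-3)] unfolding partial_homeo_def by blast
  then show ?thesis by (rule homeomorphism_cont1)
qed

lemma sigma_inj: "n \<ge> 1 \<Longrightarrow> r \<in> {1..m n} \<Longrightarrow> s \<in> {1..\<kappa> n r} \<Longrightarrow>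
   x \<in> B n r \<Longrightarrow> y \<in> B n r \<Longrightarrow> \<sigma> n r s x = \<sigma> n r s y \<Longrightarrow> x = y"
proof -
  assume a: "n \<ge> 1" "r \<in> {1..m n}" "s \<in> {1..\<kappa> n r}" "x \<in> B n r" "y \<in> B n r"
    "\<sigma> n r s x = \<sigma> n r s y"
  obtain g where "homeomorphism (B n r) (\<sigma> n r s ` B n r) (\<sigma> n r s) g"
    using sigma_ph[OF a(1-3)] unfolding partial_homeo_def by blast
  then have "\<forall>z\<in>B n r. g (\<sigma> n r s z) = z" unfolding homeomorphism_def by blast
  then show "x = y" using a(4-6) by metis
qed

lemma sigma_into: "n \<ge> 1 \<Longrightarrow> r \<in> {1..m (Suc n)} \<Longrightarrow> s \<in> {1..\<kappa> (Suc n) r} \<Longrightarrow>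
   \<exists>i\<in>{1..m n}. \<sigma> (Suc n) r s ` B (Suc n) r \<subseteq> B n i"
  using cond_ii[of "Suc n" r s] by (simp add: mm_def BB_def)

lemma phi_block:
  assumes "r \<in> {1..m (Suc n)}" "x \<in> B (Suc n) r"
  shows "phi m B \<kappa> \<sigma> n \<xi> x = (\<Sum>s = 1..\<kappa> (Suc n) r. \<xi> (\<sigma> (Suc n) r s x))"
proof -
  have "phi m B \<kappa> \<sigma> n \<xi> x = (\<Sum>r' = 1..m (Suc n). if r' = r then (\<Sum>s = 1..\<kappa> (Suc n) r'. \<xi> (\<sigma> (Suc n) r' s x)) else 0)"
    unfolding phi_def
  proof (rule sum.cong)
    fix r' assume r': "r' \<in> {1..m (Suc n)}"
    show "(if x \<in> B (Suc n) r' then \<Sum>s = 1..\<kappa> (Suc n) r'. \<xi> (\<sigma> (Suc n) r' s x) else 0) =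
          (if r' = r then \<Sum>s = 1..\<kappa> (Suc n) r'. \<xi> (\<sigma> (Suc n) r' s x) else 0)"
      using B_disj[of "Suc n" r r'] assms r' by auto
  qed simp
  also have "\<dots> = (\<Sum>s = 1..\<kappa> (Suc n) r. \<xi> (\<sigma> (Suc n) r s x))"
    using assms(1) by (simp add: sum.delta')
  finally show ?thesis .
qed

lemma phi_outside: "x \<notin> UU m B (Suc n) \<Longrightarrow> phi m B \<kappa> \<sigma> n \<xi> x = 0"
  by (auto simp: phi_def UU_pos intro!: sum.neutral)

lemma phi_CU:
  assumes n: "n \<ge> 1" and f: "f \<in> CU m B n"
  shows "phi m B \<kappa> \<sigma> n f \<in> CU m B (Suc n)"
proof -
  have fc: "continuous_on (UU m B n) f" using f by (simp add: CU_def)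
  have "continuous_on (\<Union>r\<in>{1..m (Suc n)}. B (Suc n) r) (phi m B \<kappa> \<sigma> n f)"
  proof (rule continuous_on_closed_Union)
    fix r assume r: "r \<in> {1..m (Suc n)}"
    show "closed (B (Suc n) r)" using B_closed r by simp
    have "continuous_on (B (Suc n) r) (\<lambda>x. \<Sum>s = 1..\<kappa> (Suc n) r. f (\<sigma> (Suc n) r s x))"
    proof (rule continuous_on_sum)
      fix s assume s: "s \<in> {1..\<kappa> (Suc n) r}"
      obtain i where i: "i \<in> {1..m n}" "\<sigma> (Suc n) r s ` B (Suc n) r \<subseteq> B n i"
        using sigma_into[OF n r s] by blast
      have "B n i \<subseteq> UU m B n" using i n by (auto simp: UU_pos)
      show "continuous_on (B (Suc n) r) (\<lambda>x. f (\<sigma> (Suc n) r s x))"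
        by (rule continuous_on_compose2[OF fc sigma_cont]) (use r s i \<open>B n i \<subseteq> UU m B n\<close> in auto)
    qed
    then show "continuous_on (B (Suc n) r) (phi m B \<kappa> \<sigma> n f)"
      by (rule continuous_on_eq) (simp add: phi_block[OF r])
  qed simp
  then show ?thesis unfolding CU_def using phi_outside by (simp add: UU_pos)
qed

lemma phi_CUt:
  assumes n: "n \<ge> 1" and f: "f \<in> CUt m B n"
  shows "phi m B \<kappa> \<sigma> n f \<in> CUt m B (Suc n)"
proof -
  have fCU: "f \<in> CU m B n" using f by (simp add: CUt_def)
  have fc: "\<And>r. r \<in> {1..m n} \<Longrightarrow> \<exists>c. \<forall>x\<in>B n r. f x = c" using f by (simp add: CUt_def)
  have "\<exists>c. \<forall>x\<in>B (Suc n) r. phi m B \<kappa> \<sigma> n f x = c" if r: "r \<in> {1..m (Suc n)}" for r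
  proof (rule const_ex)
    fix x y assume x: "x \<in> B (Suc n) r" and y: "y \<in> B (Suc n) r"
    show "phi m B \<kappa> \<sigma> n f x = phi m B \<kappa> \<sigma> n f y"
      unfolding phi_block[OF r x] phi_block[OF r y]
    proof (rule sum.cong)
      fix s assume s: "s \<in> {1..\<kappa> (Suc n) r}"
      obtain i where i: "i \<in> {1..m n}" "\<sigma> (Suc n) r s ` B (Suc n) r \<subseteq> B n i"
        using sigma_into[OF n r s] by blast
      obtain c where c: "\<forall>x\<in>B n i. f x = c" using fc[OF i(1)] by blast
      have "\<sigma> (Suc n) r s x \<in> B n i" "\<sigma> (Suc n) r s y \<in> B n i" using i(2) x y by blast+
      then show "f (\<sigma> (Suc n) r s x) = f (\<sigma> (Suc n) r s y)" using c by simp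
    qed simp
  qed
  then show ?thesis using phi_CU[OF n fCU] by (simp add: CUt_def)
qed

lemma CU_add: "f \<in> CU m B n \<Longrightarrow> g \<in> CU m B n \<Longrightarrow> f + g \<in> CU m B n"
  by (auto simp: CU_def plus_fun_def intro: continuous_on_add)

lemma CUt_add: "f \<in> CUt m B n \<Longrightarrow> g \<in> CUt m B n \<Longrightarrow> f + g \<in> CUt m B n"
proof -
  assume f: "f \<in> CUt m B n" and g: "g \<in> CUt m B n"
  have "f + g \<in> CU m B n" using f g CU_add by (simp add: CUt_def)
  moreover have "\<exists>c. \<forall>x\<in>B n r. (f + g) x = c" if r: "r \<in> {1..m n}" for r
  proof -
    have "\<exists>c. \<forall>x\<in>B n r. f x = c" using f r by (simp add: CUt_def)
    then obtain c1 where c1: "\<forall>x\<in>B n r. f x = c1" by blast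
    have "\<exists>c. \<forall>x\<in>B n r. g x = c" using g r by (simp add: CUt_def)
    then obtain c2 where c2: "\<forall>x\<in>B n r. g x = c2" by blast
    show ?thesis using c1 c2 by (auto simp: plus_fun_def)
  qed
  ultimately show "f + g \<in> CUt m B n" by (simp add: CUt_def)
qed

end

context sysm begin

lemma adm_range:
  assumes "admissible m B \<kappa> \<sigma> k rs ss" "1 \<le> j" "j \<le> k"
  shows "rs j \<in> {1..m j}" "ss j \<in> {1..\<kappa> j (rs j)}"
  using assms unfolding admissible_def by auto

lemma adm_sub:
  assumes "admissible m B \<kappa> \<sigma> k rs ss" "2 \<le> j" "j \<le> k"
  shows "\<sigma> j (rs j) (ss j) ` B j (rs j) \<subseteq> B (j - 1) (rs (j - 1))"
  using assms unfolding admissible_def by auto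

lemma tau_uniq:
  "admissible m B \<kappa> \<sigma> j rs ss \<Longrightarrow> admissible m B \<kappa> \<sigma> j rs' ss' \<Longrightarrow>
   (0 < j \<Longrightarrow> x \<in> B j (rs j)) \<Longrightarrow> (0 < j \<Longrightarrow> x' \<in> B j (rs' j)) \<Longrightarrow>
   tau_comp \<sigma> j rs ss x = tau_comp \<sigma> j rs' ss' x' \<Longrightarrow>
   x = x' \<and> (\<forall>i\<in>{1..j}. rs i = rs' i \<and> ss i = ss' i)"
proof (induction j arbitrary: x x')
  case 0
  then show ?case by simp
next
  case (Suc j)
  note adm = Suc.prems(1) Suc.prems(2)
  have admj: "admissible m B \<kappa> \<sigma> j rs ss" "admissible m B \<kappa> \<sigma> j rs' ss'"
    using admissible_mono[OF adm(1), of j] admissible_mono[OF adm(2), of j] by simp_all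
  have xB: "x \<in> B (Suc j) (rs (Suc j))" "x' \<in> B (Suc j) (rs' (Suc j))" using Suc.prems(3,4) by auto
  have rg: "rs (Suc j) \<in> {1..m (Suc j)}" "ss (Suc j) \<in> {1..\<kappa> (Suc j) (rs (Suc j))}"
    "rs' (Suc j) \<in> {1..m (Suc j)}" "ss' (Suc j) \<in> {1..\<kappa> (Suc j) (rs' (Suc j))}"
    using adm_range[OF adm(1)] adm_range[OF adm(2)] by auto
  define y where "y = \<sigma> (Suc j) (rs (Suc j)) (ss (Suc j)) x"
  define y' where "y' = \<sigma> (Suc j) (rs' (Suc j)) (ss' (Suc j)) x'"
  have yy: "tau_comp \<sigma> j rs ss y = tau_comp \<sigma> j rs' ss' y'" using Suc.prems(5) by (simp add: y_def y'_def)
  have yB: "y \<in> B j (rs j)" if "0 < j"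
    using adm_sub[OF adm(1), of "Suc j"] that xB(1) unfolding y_def by auto
  have y'B: "y' \<in> B j (rs' j)" if "0 < j"
    using adm_sub[OF adm(2), of "Suc j"] that xB(2) unfolding y'_def by auto
  have IH: "y = y' \<and> (\<forall>i\<in>{1..j}. rs i = rs' i \<and> ss i = ss' i)"
    by (rule Suc.IH[OF admj yB y'B yy])
  have eqrs: "(rs (Suc j), ss (Suc j)) = (rs' (Suc j), ss' (Suc j))"
  proof (rule ccontr)
    assume ne: "(rs (Suc j), ss (Suc j)) \<noteq> (rs' (Suc j), ss' (Suc j))"
    have "y \<in> \<sigma> (Suc j) (rs (Suc j)) (ss (Suc j)) ` B (Suc j) (rs (Suc j))" using xB y_def by blast
    moreover have "y \<in> \<sigma> (Suc j) (rs' (Suc j)) (ss' (Suc j)) ` B (Suc j) (rs' (Suc j))"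
      using xB y'_def IH by blast
    moreover have "\<sigma> (Suc j) (rs (Suc j)) (ss (Suc j)) ` B (Suc j) (rs (Suc j)) \<inter>
        \<sigma> (Suc j) (rs' (Suc j)) (ss' (Suc j)) ` B (Suc j) (rs' (Suc j)) = {}"
      by (rule cond_iii_disj[OF _ rg ne]) simp
    ultimately show False by blast
  qed
  then have "x = x'"
    using sigma_inj[of "Suc j" "rs (Suc j)" "ss (Suc j)" x x'] rg xB IH y_def y'_def by auto
  moreover have "\<forall>i\<in>{1..Suc j}. rs i = rs' i \<and> ss i = ss' i"
  proof
    fix i assume "i \<in> {1..Suc j}"
    then have "i \<in> {1..j} \<or> i = Suc j" by auto
    then show "rs i = rs' i \<and> ss i = ss' i" using IH eqrs by auto
  qed
  ultimately show ?case by blast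
qed

lemma idpath:
  "1 \<le> i \<Longrightarrow> r \<in> {1..m i} \<Longrightarrow> \<exists>rs0. rs0 i = r \<and> admissible m B \<kappa> \<sigma> i rs0 (\<lambda>_. 1) \<and>
     (\<forall>x\<in>B i r. tau_comp \<sigma> i rs0 (\<lambda>_. 1) x = x)"
proof (induction i arbitrary: r)
  case 0
  then show ?case by simp
next
  case (Suc i)
  show ?case
  proof (cases "i = 0")
    case True
    have "admissible m B \<kappa> \<sigma> (Suc i) (\<lambda>_. r) (\<lambda>_. 1)"
      unfolding admissible_def using True Suc.prems kappa_pos[of 1 r] by auto
    moreover have "\<forall>x\<in>B (Suc i) r. tau_comp \<sigma> (Suc i) (\<lambda>_. r) (\<lambda>_. 1) x = x"
      using True cond_i[of 1 r] Suc.prems by auto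
    ultimately show ?thesis by (intro exI[of _ "\<lambda>_. r"]) simp
  next
    case False
    then have i1: "1 \<le> i" by simp
    have s1: "1 \<in> {1..\<kappa> (Suc i) r}" using kappa_pos[of "Suc i" r] Suc.prems by auto
    obtain i0 where i0: "i0 \<in> {1..m i}" "\<sigma> (Suc i) r 1 ` B (Suc i) r \<subseteq> B i i0"
      using sigma_into[OF i1 Suc.prems(2) s1] by blast
    have Bsub: "B (Suc i) r \<subseteq> B i i0"
    proof
      fix x assume x: "x \<in> B (Suc i) r"
      have "\<sigma> (Suc i) r 1 x = x" using cond_i[of "Suc i" r x] Suc.prems x by auto
      then show "x \<in> B i i0" using i0(2) x by (metis image_subset_iff)
    qed
    obtain rs1 where rs1: "rs1 i = i0" "admissible m B \<kappa> \<sigma> i rs1 (\<lambda>_. 1)"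
      "\<forall>x\<in>B i i0. tau_comp \<sigma> i rs1 (\<lambda>_. 1) x = x"
      using Suc.IH[OF i1 i0(1)] by blast
    define rs0 where "rs0 = rs1(Suc i := r)"
    have agree: "\<And>j. j \<le> i \<Longrightarrow> rs0 j = rs1 j" unfolding rs0_def by auto
    have "admissible m B \<kappa> \<sigma> (Suc i) rs0 (\<lambda>_. 1)"
      unfolding admissible_def
    proof (rule conjI[OF ballI ballI])
      fix j assume j: "j \<in> {1..Suc i}"
      show "rs0 j \<in> {1..m j} \<and> 1 \<in> {1..\<kappa> j (rs0 j)}"
      proof (cases "j = Suc i")
        case True
        then show ?thesis using Suc.prems s1 by (simp add: rs0_def)
      next
        case False
        then have "j \<le> i" using j by auto
        then show ?thesis using adm_range[OF rs1(2), of j] agree j by auto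
      qed
    next
      fix j assume j: "j \<in> {2..Suc i}"
      show "\<sigma> j (rs0 j) 1 ` B j (rs0 j) \<subseteq> B (j - 1) (rs0 (j - 1))"
      proof (cases "j = Suc i")
        case True
        then show ?thesis using i0(2) rs1(1) by (simp add: rs0_def)
      next
        case False
        then have "j \<le> i" using j by auto
        then show ?thesis using adm_sub[OF rs1(2), of j] agree[of j] agree[of "j - 1"] j by auto
      qed
    qed
    moreover have "\<forall>x\<in>B (Suc i) r. tau_comp \<sigma> (Suc i) rs0 (\<lambda>_. 1) x = x"
    proof
      fix x assume x: "x \<in> B (Suc i) r"
      have "tau_comp \<sigma> (Suc i) rs0 (\<lambda>_. 1) x = tau_comp \<sigma> i rs0 (\<lambda>_. 1) (\<sigma> (Suc i) r 1 x)"
        by (simp add: rs0_def)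
      also have "\<dots> = tau_comp \<sigma> i rs0 (\<lambda>_. 1) x" using cond_i[of "Suc i" r x] Suc.prems x by auto
      also have "\<dots> = tau_comp \<sigma> i rs1 (\<lambda>_. 1) x"
      proof -
        have "tau_comp \<sigma> i rs0 (\<lambda>_. 1) = tau_comp \<sigma> i rs1 (\<lambda>_. 1)"
          by (rule tau_cong) (use agree in auto)
        then show ?thesis by simp
      qed
      also have "\<dots> = x" using rs1(3) Bsub x by auto
      finally show "tau_comp \<sigma> (Suc i) rs0 (\<lambda>_. 1) x = x" .
    qed
    moreover have "rs0 (Suc i) = r" by (simp add: rs0_def)
    ultimately show ?thesis by blast
  qed
qed

lemma block_sub:
  assumes admK: "admissible m B \<kappa> \<sigma> K RS SS" and admj: "admissible m B \<kappa> \<sigma> j rs ss"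
    and j: "1 \<le> j" "j \<le> K"
    and u1: "u \<in> tau_comp \<sigma> K RS SS ` B K (RS K)" and u2: "u \<in> tau_comp \<sigma> j rs ss ` B j (rs j)"
  shows "tau_comp \<sigma> K RS SS ` B K (RS K) \<subseteq> tau_comp \<sigma> j rs ss ` B j (rs j)"
proof -
  have Kj: "j + (K - j) = K" using j by simp
  have tK: "tau_comp \<sigma> K RS SS = tau_comp \<sigma> j RS SS \<circ> cb \<sigma> j (K - j) RS SS"
    using tau_cb[of \<sigma> j "K - j" RS SS] Kj by simp
  have cbin: "cb \<sigma> j (K - j) RS SS w \<in> B j (RS j)" if w: "w \<in> B K (RS K)" for w
  proof (rule cb_into)
    fix i assume "j < i" "i \<le> j + (K - j)"
    then show "\<sigma> i (RS i) (SS i) ` B i (RS i) \<subseteq> B (i - 1) (RS (i - 1))"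
      using adm_sub[OF admK, of i] j by auto
  qed (use w Kj in simp)
  have admjK: "admissible m B \<kappa> \<sigma> j RS SS" using admissible_mono[OF admK j(2)] .
  obtain w where w: "w \<in> B K (RS K)" "u = tau_comp \<sigma> K RS SS w" using u1 by blast
  obtain w2 where w2: "w2 \<in> B j (rs j)" "u = tau_comp \<sigma> j rs ss w2" using u2 by blast
  have "tau_comp \<sigma> j RS SS (cb \<sigma> j (K - j) RS SS w) = tau_comp \<sigma> j rs ss w2"
    using w w2 tK by simp
  then have ag: "\<forall>i\<in>{1..j}. RS i = rs i \<and> SS i = ss i"
    using tau_uniq[OF admjK admj _ _ , of "cb \<sigma> j (K - j) RS SS w" w2] cbin[OF w(1)] w2(1) by blast
  have teq: "tau_comp \<sigma> j RS SS = tau_comp \<sigma> j rs ss" by (rule tau_cong) (use ag in auto)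
  have RSj: "RS j = rs j" using ag j by auto
  show ?thesis
  proof
    fix v assume "v \<in> tau_comp \<sigma> K RS SS ` B K (RS K)"
    then obtain w' where w': "w' \<in> B K (RS K)" "v = tau_comp \<sigma> K RS SS w'" by blast
    then have "v = tau_comp \<sigma> j rs ss (cb \<sigma> j (K - j) RS SS w')" using tK teq by simp
    moreover have "cb \<sigma> j (K - j) RS SS w' \<in> B j (rs j)" using cbin[OF w'(1)] RSj by simp
    ultimately show "v \<in> tau_comp \<sigma> j rs ss ` B j (rs j)" by blast
  qed
qed

end


context sysm begin

lemma fine_level:
  assumes n: "n \<ge> 1" and f: "f \<in> CU m B n"
  shows "\<exists>K\<ge>n. \<forall>RS SS. admissible m B \<kappa> \<sigma> K RS SS \<longrightarrow>
           tau_comp \<sigma> K RS SS ` B K (RS K) \<subseteq> UU m B n \<longrightarrow>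
           (\<forall>u\<in>tau_comp \<sigma> K RS SS ` B K (RS K). \<forall>v\<in>tau_comp \<sigma> K RS SS ` B K (RS K). f u = f v)"
proof -
  define U where "U = UU m B n"
  have Ueq: "U = (\<Union>r\<in>{1..m n}. B n r)" using n by (simp add: U_def UU_pos)
  have Uo: "open U" unfolding Ueq using B_open n by auto
  have Ucl: "closed U" unfolding Ueq using B_closed n by (intro closed_UN) auto
  have Ucomp: "compact U" using compact_Int_closed[OF compact_X Ucl] by simp
  have fc: "continuous_on U f" using f by (simp add: CU_def U_def)
  define V where "V x = f -` {f x} \<inter> U" for x
  have Vo: "open (V x)" for x
    unfolding V_def using fc Uo by (simp add: continuous_on_open_vimage open_discrete)
  have "\<forall>x\<in>U. \<exists>b. b \<in> tau_family m B \<kappa> \<sigma> \<and> x \<in> b \<and> b \<subseteq> V x"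
  proof
    fix x assume "x \<in> U"
    then have "x \<in> V x" by (simp add: V_def)
    then obtain b where "b \<in> tau_family m B \<kappa> \<sigma>" "x \<in> b" "b \<subseteq> V x"
      using topological_basisE[OF tau_basis Vo] by blast
    then show "\<exists>b. b \<in> tau_family m B \<kappa> \<sigma> \<and> x \<in> b \<and> b \<subseteq> V x" by blast
  qed
  then obtain bb where bb: "\<And>x. x \<in> U \<Longrightarrow> bb x \<in> tau_family m B \<kappa> \<sigma> \<and> x \<in> bb x \<and> bb x \<subseteq> V x"
    by metis
  have "\<forall>x\<in>U. \<exists>j rs ss. bb x = tau_comp \<sigma> j rs ss ` B j (rs j) \<and> 1 \<le> j \<and> admissible m B \<kappa> \<sigma> j rs ss"
  proof
    fix x assume "x \<in> U"
    then have "bb x \<in> tau_family m B \<kappa> \<sigma>" using bb by blast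
    then show "\<exists>j rs ss. bb x = tau_comp \<sigma> j rs ss ` B j (rs j) \<and> 1 \<le> j \<and> admissible m B \<kappa> \<sigma> j rs ss"
      unfolding tau_family_def by blast
  qed
  then obtain lev RS0 SS0 where lv: "\<And>x. x \<in> U \<Longrightarrow> bb x = tau_comp \<sigma> (lev x) (RS0 x) (SS0 x) ` B (lev x) (RS0 x (lev x))
      \<and> 1 \<le> lev x \<and> admissible m B \<kappa> \<sigma> (lev x) (RS0 x) (SS0 x)"
    by metis
  obtain C where C: "C \<subseteq> U" "finite C" "U \<subseteq> (\<Union>x\<in>C. bb x)"
  proof (rule compactE_image[OF Ucomp, of U bb])
    show "\<And>x. x \<in> U \<Longrightarrow> open (bb x)" using bb topological_basis_open[OF tau_basis] by blast
    show "U \<subseteq> (\<Union>x\<in>U. bb x)" using bb by blast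
  qed blast
  define K where "K = max n (Max (insert 0 (lev ` C)))"
  have Kn: "K \<ge> n" by (simp add: K_def)
  have Klev: "lev x \<le> K" if "x \<in> C" for x
  proof -
    have "lev x \<le> Max (insert 0 (lev ` C))" using C(2) that by (intro Max_ge) auto
    then show ?thesis by (simp add: K_def)
  qed
  have "\<forall>RS SS. admissible m B \<kappa> \<sigma> K RS SS \<longrightarrow>
           tau_comp \<sigma> K RS SS ` B K (RS K) \<subseteq> UU m B n \<longrightarrow>
           (\<forall>u\<in>tau_comp \<sigma> K RS SS ` B K (RS K). \<forall>v\<in>tau_comp \<sigma> K RS SS ` B K (RS K). f u = f v)"
  proof (intro allI impI ballI)
    fix RS SS u v
    assume adm: "admissible m B \<kappa> \<sigma> K RS SS" and TU: "tau_comp \<sigma> K RS SS ` B K (RS K) \<subseteq> UU m B n"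
      and u: "u \<in> tau_comp \<sigma> K RS SS ` B K (RS K)" and v: "v \<in> tau_comp \<sigma> K RS SS ` B K (RS K)"
    have "u \<in> U" using u TU by (auto simp: U_def)
    then obtain x where x: "x \<in> C" "u \<in> bb x" using C by blast
    have xU: "x \<in> U" using x C by blast
    note lx = lv[OF xU]
    have sub: "tau_comp \<sigma> K RS SS ` B K (RS K) \<subseteq> bb x"
      using block_sub[OF adm _ _ Klev[OF x(1)] u, of "RS0 x" "SS0 x"] lx x(2) by auto
    have "u \<in> V x" "v \<in> V x" using sub u v bb[OF xU] by blast+
    then show "f u = f v" by (simp add: V_def)
  qed
  then show ?thesis using Kn by blast
qed

lemma eventually_CUt:
  assumes n: "n \<ge> 1" and f: "f \<in> CU m B n"
  shows "\<exists>k\<ge>n. trans_map (phi m B \<kappa> \<sigma>) n (k - n) f \<in> CUt m B k"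
proof -
  obtain K where Kn: "K \<ge> n" and fine: "\<And>RS SS. admissible m B \<kappa> \<sigma> K RS SS \<Longrightarrow>
           tau_comp \<sigma> K RS SS ` B K (RS K) \<subseteq> UU m B n \<Longrightarrow>
           (\<forall>u\<in>tau_comp \<sigma> K RS SS ` B K (RS K). \<forall>v\<in>tau_comp \<sigma> K RS SS ` B K (RS K). f u = f v)"
    using fine_level[OF n f] by blast
  define h where "h d = trans_map (phi m B \<kappa> \<sigma>) n d f" for d
  define good where "good d rs ss \<longleftrightarrow> rs (n + d) \<in> {1..m (n + d)} \<and> rs K \<in> {1..m K} \<and>
      (\<forall>i. n + d < i \<and> i \<le> K \<longrightarrow> rs i \<in> {1..m i} \<and> ss i \<in> {1..\<kappa> i (rs i)} \<and>
          \<sigma> i (rs i) (ss i) ` B i (rs i) \<subseteq> B (i - 1) (rs (i - 1)))" for d rs ss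
  have claim: "d \<le> K - n \<longrightarrow> (\<forall>rs ss. good d rs ss \<longrightarrow> (\<forall>x\<in>B K (rs K). \<forall>y\<in>B K (rs K).
      h d (cb \<sigma> (n + d) (K - (n + d)) rs ss x) = h d (cb \<sigma> (n + d) (K - (n + d)) rs ss y)))" for d
  proof (induction d)
    case 0
    show ?case
    proof (intro impI allI ballI)
      fix rs ss x y assume g: "good 0 rs ss" and x: "x \<in> B K (rs K)" and y: "y \<in> B K (rs K)"
      define w where "w = cb \<sigma> n (K - n) rs ss"
      have KnK: "n + (K - n) = K" using Kn by simp
      have wB: "w z \<in> B n (rs n)" if z: "z \<in> B K (rs K)" for z
        unfolding w_def
      proof (rule cb_into)
        fix i assume "n < i" "i \<le> n + (K - n)"
        then show "\<sigma> i (rs i) (ss i) ` B i (rs i) \<subseteq> B (i - 1) (rs (i - 1))"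
          using g KnK by (auto simp: good_def)
      qed (use z KnK in simp)
      have rsn: "rs n \<in> {1..m n}" using g by (simp add: good_def)
      obtain rs0 where rs0: "rs0 n = rs n" "admissible m B \<kappa> \<sigma> n rs0 (\<lambda>_. 1)"
        "\<forall>x\<in>B n (rs n). tau_comp \<sigma> n rs0 (\<lambda>_. 1) x = x"
        using idpath[OF n rsn] by blast
      define RS where "RS i = (if i \<le> n then rs0 i else rs i)" for i
      define SS where "SS i = (if i \<le> n then 1 else ss i)" for i
      have RSK: "RS K = rs K" using rs0(1) Kn by (cases "K = n") (auto simp: RS_def)
      have adm: "admissible m B \<kappa> \<sigma> K RS SS"
        unfolding admissible_def
      proof (rule conjI[OF ballI ballI])
        fix j assume j: "j \<in> {1..K}"
        show "RS j \<in> {1..m j} \<and> SS j \<in> {1..\<kappa> j (RS j)}"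
        proof (cases "j \<le> n")
          case True
          then show ?thesis using adm_range[OF rs0(2), of j] j by (auto simp: RS_def SS_def)
        next
          case False
          then show ?thesis using g j by (auto simp: RS_def SS_def good_def)
        qed
      next
        fix j assume j: "j \<in> {2..K}"
        show "\<sigma> j (RS j) (SS j) ` B j (RS j) \<subseteq> B (j - 1) (RS (j - 1))"
        proof (cases "j \<le> n")
          case True
          then show ?thesis using adm_sub[OF rs0(2), of j] j by (auto simp: RS_def SS_def)
        next
          case False
          then have "n < j" "j \<le> K" using j by auto
          then have "\<sigma> j (rs j) (ss j) ` B j (rs j) \<subseteq> B (j - 1) (rs (j - 1))"
            using g by (auto simp: good_def)
          moreover have "RS (j - 1) = rs (j - 1)"
          proof (cases "j - 1 = n")
            case True
            then show ?thesis using rs0(1) by (simp add: RS_def)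
          next
            case False
            then have "\<not> j - 1 \<le> n" using \<open>n < j\<close> by linarith
            then show ?thesis by (simp add: RS_def)
          qed
          ultimately show ?thesis using False by (simp add: RS_def SS_def)
        qed
      qed
      have t1: "tau_comp \<sigma> n RS SS = tau_comp \<sigma> n rs0 (\<lambda>_. 1)"
        by (rule tau_cong) (auto simp: RS_def SS_def)
      have c1: "cb \<sigma> n (K - n) RS SS = w"
        unfolding w_def by (rule cb_cong) (auto simp: RS_def SS_def)
      have tK: "tau_comp \<sigma> K RS SS = tau_comp \<sigma> n rs0 (\<lambda>_. 1) \<circ> w"
        using tau_cb[of \<sigma> n "K - n" RS SS] KnK t1 c1 by simp
      have Teq: "tau_comp \<sigma> K RS SS ` B K (RS K) = w ` B K (rs K)"
      proof -
        have "\<And>z. z \<in> B K (rs K) \<Longrightarrow> tau_comp \<sigma> K RS SS z = w z"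
          using tK wB rs0(3) by simp
        then show ?thesis using RSK by (auto simp: image_def)
      qed
      have TU: "tau_comp \<sigma> K RS SS ` B K (RS K) \<subseteq> UU m B n"
        unfolding Teq using wB rsn n by (auto simp: UU_pos)
      have "f (w x) = f (w y)" using fine[OF adm TU] Teq x y by blast
      then show "h 0 (cb \<sigma> (n + 0) (K - (n + 0)) rs ss x) = h 0 (cb \<sigma> (n + 0) (K - (n + 0)) rs ss y)"
        by (simp add: h_def w_def)
    qed
  next
    case (Suc d)
    show ?case
    proof (intro impI allI ballI)
      assume dle: "Suc d \<le> K - n"
      fix rs ss x y assume g: "good (Suc d) rs ss" and x: "x \<in> B K (rs K)" and y: "y \<in> B K (rs K)"
      define j where "j = n + d"
      have j1: "j \<ge> 1" using n by (simp add: j_def)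
      have jK: "Suc j \<le> K" using dle Kn by (simp add: j_def)
      have KS: "K - (n + Suc d) = K - Suc j" by (simp add: j_def)
      have KS2: "K - (n + d) = Suc (K - Suc j)" using jK by (simp add: j_def)
      define r where "r = rs (Suc j)"
      have r: "r \<in> {1..m (Suc j)}" using g by (simp add: good_def r_def j_def)
      define z where "z = cb \<sigma> (Suc j) (K - Suc j) rs ss"
      have zB: "z t \<in> B (Suc j) r" if t: "t \<in> B K (rs K)" for t
        unfolding z_def r_def
      proof (rule cb_into)
        fix i assume "Suc j < i" "i \<le> Suc j + (K - Suc j)"
        then show "\<sigma> i (rs i) (ss i) ` B i (rs i) \<subseteq> B (i - 1) (rs (i - 1))"
          using g jK by (auto simp: good_def j_def)
      qed (use t jK in simp)
      have step: "h d (\<sigma> (Suc j) r s (z x)) = h d (\<sigma> (Suc j) r s (z y))"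
        if s: "s \<in> {1..\<kappa> (Suc j) r}" for s
      proof -
        obtain i where i: "i \<in> {1..m j}" "\<sigma> (Suc j) r s ` B (Suc j) r \<subseteq> B j i"
          using sigma_into[OF j1 r s] by blast
        define rs' where "rs' = rs(j := i)"
        define ss' where "ss' = ss(Suc j := s)"
        have g': "good d rs' ss'"
          unfolding good_def
        proof (intro conjI)
          show "rs' (n + d) \<in> {1..m (n + d)}" using i by (simp add: rs'_def j_def)
          show "rs' K \<in> {1..m K}" using g jK by (simp add: rs'_def good_def)
        next
          show "\<forall>i'. n + d < i' \<and> i' \<le> K \<longrightarrow> rs' i' \<in> {1..m i'} \<and> ss' i' \<in> {1..\<kappa> i' (rs' i')} \<and>
              \<sigma> i' (rs' i') (ss' i') ` B i' (rs' i') \<subseteq> B (i' - 1) (rs' (i' - 1))"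
          proof (intro allI impI)
          fix i' assume i': "n + d < i' \<and> i' \<le> K"
          show "rs' i' \<in> {1..m i'} \<and> ss' i' \<in> {1..\<kappa> i' (rs' i')} \<and>
              \<sigma> i' (rs' i') (ss' i') ` B i' (rs' i') \<subseteq> B (i' - 1) (rs' (i' - 1))"
          proof (cases "i' = Suc j")
            case True
            then show ?thesis using r s i by (simp add: rs'_def ss'_def r_def)
          next
            case False
            then have "n + Suc d < i'" "i' \<le> K" using i' by (auto simp: j_def)
            moreover have "i' \<noteq> j" "i' - 1 \<noteq> j" using i' False by (auto simp: j_def)
            ultimately show ?thesis using g by (auto simp: good_def rs'_def ss'_def)
          qed
          qed
        qed
        have IH: "h d (cb \<sigma> (n + d) (K - (n + d)) rs' ss' x) = h d (cb \<sigma> (n + d) (K - (n + d)) rs' ss' y)"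
        proof -
          have rsK: "rs' K = rs K" using jK by (simp add: rs'_def)
          have dl: "d \<le> K - n" using dle by simp
          show ?thesis
            by (rule mp[OF Suc.IH dl, rule_format, OF g']) (use x y rsK in simp_all)
        qed
        have cbeq: "cb \<sigma> (Suc j) (K - Suc j) rs' ss' = z"
          unfolding z_def by (rule cb_cong) (auto simp: rs'_def ss'_def)
        have "cb \<sigma> (n + d) (K - (n + d)) rs' ss' = \<sigma> (Suc j) r s \<circ> z"
          unfolding KS2 using cbeq by (simp add: j_def[symmetric] rs'_def ss'_def r_def)
        then show ?thesis using IH by simp
      qed
      have hS: "h (Suc d) t = phi m B \<kappa> \<sigma> j (h d) t" for t by (simp add: h_def j_def)
      have "h (Suc d) (z x) = (\<Sum>s = 1..\<kappa> (Suc j) r. h d (\<sigma> (Suc j) r s (z x)))"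
        using hS phi_block[OF r zB[OF x]] by simp
      also have "\<dots> = (\<Sum>s = 1..\<kappa> (Suc j) r. h d (\<sigma> (Suc j) r s (z y)))"
        using step by (intro sum.cong) auto
      also have "\<dots> = h (Suc d) (z y)"
        using hS phi_block[OF r zB[OF y]] by simp
      finally have "h (Suc d) (z x) = h (Suc d) (z y)" .
      then show "h (Suc d) (cb \<sigma> (n + Suc d) (K - (n + Suc d)) rs ss x) =
                 h (Suc d) (cb \<sigma> (n + Suc d) (K - (n + Suc d)) rs ss y)"
        unfolding KS by (simp add: z_def j_def)
    qed
  qed
  have KnK: "n + (K - n) = K" using Kn by simp
  have hCU: "h (K - n) \<in> CU m B K"
  proof -
    have pres: "\<And>k x. n \<le> k \<Longrightarrow> x \<in> CU m B k \<Longrightarrow> phi m B \<kappa> \<sigma> k x \<in> CU m B (Suc k)"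
      using phi_CU n by auto
    have "trans_map (phi m B \<kappa> \<sigma>) n (K - n) f \<in> CU m B (n + (K - n))"
      using trans_map_pres[where n0=n and n=n and G="CU m B" and \<phi>="phi m B \<kappa> \<sigma>" and x=f and d="K - n"] pres f
      by blast
    then show ?thesis using KnK by (simp add: h_def)
  qed
  have "\<exists>c. \<forall>x\<in>B K r. h (K - n) x = c" if r: "r \<in> {1..m K}" for r
  proof (rule const_ex)
    fix x y assume x: "x \<in> B K r" and y: "y \<in> B K r"
    have "good (K - n) (\<lambda>_. r) (\<lambda>_. 1)" using r KnK by (simp add: good_def)
    then have "h (K - n) (cb \<sigma> (n + (K - n)) (K - (n + (K - n))) (\<lambda>_. r) (\<lambda>_. 1) x) =
               h (K - n) (cb \<sigma> (n + (K - n)) (K - (n + (K - n))) (\<lambda>_. r) (\<lambda>_. 1) y)"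
      using claim[of "K - n"] x y by blast
    then show "h (K - n) x = h (K - n) y" using KnK by simp
  qed
  then have "h (K - n) \<in> CUt m B K" using hCU by (simp add: CUt_def)
  then show ?thesis using Kn by (auto simp: h_def)
qed

end


theorem mainTheorem8:
  fixes m :: "nat \<Rightarrow> nat" and B :: "nat \<Rightarrow> nat \<Rightarrow> 'a::metric_space set"
    and \<kappa> :: "nat \<Rightarrow> nat \<Rightarrow> nat" and \<sigma> :: "nat \<Rightarrow> nat \<Rightarrow> nat \<Rightarrow> 'a \<Rightarrow> 'a"
  assumes compact_X: "compact (UNIV :: 'a set)"
    and clopen_basis: "\<exists>\<B> :: 'a set set. topological_basis \<B> \<and> (\<forall>b\<in>\<B>. closed b)"
    and m_pos: "\<And>n. n \<ge> 1 \<Longrightarrow> m n \<ge> 1"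
    and B_nonempty: "\<And>n r. n \<ge> 1 \<Longrightarrow> r \<in> {1..m n} \<Longrightarrow> B n r \<noteq> {}"
    and B_clopen: "\<And>n r. n \<ge> 1 \<Longrightarrow> r \<in> {1..m n} \<Longrightarrow> clopen_set (B n r)"
    and B_disj: "\<And>n r r'. n \<ge> 1 \<Longrightarrow> r \<in> {1..m n} \<Longrightarrow> r' \<in> {1..m n} \<Longrightarrow> r \<noteq> r' \<Longrightarrow>
                   B n r \<inter> B n r' = {}"
    and kappa_pos: "\<And>n r. n \<ge> 1 \<Longrightarrow> r \<in> {1..m n} \<Longrightarrow> \<kappa> n r \<ge> 1"
    and sigma_ph: "\<And>n r s. n \<ge> 1 \<Longrightarrow> r \<in> {1..m n} \<Longrightarrow> s \<in> {1..\<kappa> n r} \<Longrightarrow>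
                   partial_homeo (B n r) (\<sigma> n r s)"
    and cond_i: "\<And>n r x. n \<ge> 1 \<Longrightarrow> r \<in> {1..m n} \<Longrightarrow> x \<in> B n r \<Longrightarrow> \<sigma> n r 1 x = x"
    and cond_ii: "\<And>n r s. n \<ge> 1 \<Longrightarrow> r \<in> {1..m n} \<Longrightarrow> s \<in> {1..\<kappa> n r} \<Longrightarrow>
                   \<exists>i\<in>{1..mm m (n - 1)}. \<sigma> n r s ` B n r \<subseteq> BB B (n - 1) i"
    and cond_iii_disj: "\<And>n r s r' s'. n \<ge> 1 \<Longrightarrow> r \<in> {1..m n} \<Longrightarrow> s \<in> {1..\<kappa> n r} \<Longrightarrow>
                   r' \<in> {1..m n} \<Longrightarrow> s' \<in> {1..\<kappa> n r'} \<Longrightarrow> (r, s) \<noteq> (r', s') \<Longrightarrow>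
                   \<sigma> n r s ` B n r \<inter> \<sigma> n r' s' ` B n r' = {}"
    and cond_iii_union: "\<And>n. n \<ge> 1 \<Longrightarrow>
                   (\<Union>r\<in>{1..m n}. \<Union>s\<in>{1..\<kappa> n r}. \<sigma> n r s ` B n r) = UU m B (n - 1)"
    and tau_basis: "topological_basis (tau_family m B \<kappa> \<sigma>)"
  shows "(\<forall>n\<ge>1. \<forall>f\<in>CUt m B n. phi m B \<kappa> \<sigma> n f \<in> CUt m B (Suc n))
    \<and> bij_betw (dl_induced 1 (CU m B) (phi m B \<kappa> \<sigma>))
         (dlim 1 (CUt m B) (phi m B \<kappa> \<sigma>)) (dlim 1 (CU m B) (phi m B \<kappa> \<sigma>))
    \<and> (\<forall>A\<in>dlim 1 (CUt m B) (phi m B \<kappa> \<sigma>). \<forall>A'\<in>dlim 1 (CUt m B) (phi m B \<kappa> \<sigma>).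
         dl_induced 1 (CU m B) (phi m B \<kappa> \<sigma>) (dl_add 1 (CUt m B) (phi m B \<kappa> \<sigma>) A A')
         = dl_add 1 (CU m B) (phi m B \<kappa> \<sigma>)
             (dl_induced 1 (CU m B) (phi m B \<kappa> \<sigma>) A) (dl_induced 1 (CU m B) (phi m B \<kappa> \<sigma>) A'))"
  proof -
  interpret sysm m B \<kappa> \<sigma>
    by unfold_locales (fact compact_X B_clopen B_disj kappa_pos sigma_ph cond_i cond_ii cond_iii_disj tau_basis)+
  have HG: "\<And>n. CUt m B n \<subseteq> CU m B n" by (auto simp: CUt_def)
  have p1: "\<forall>n\<ge>1. \<forall>f\<in>CUt m B n. phi m B \<kappa> \<sigma> n f \<in> CUt m B (Suc n)"
    using phi_CUt by blast
  have p2: "bij_betw (dl_induced 1 (CU m B) (phi m B \<kappa> \<sigma>))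
         (dlim 1 (CUt m B) (phi m B \<kappa> \<sigma>)) (dlim 1 (CU m B) (phi m B \<kappa> \<sigma>))"
    by (rule dl_bij[OF HG eventually_CUt])
  have p3: "\<forall>A\<in>dlim 1 (CUt m B) (phi m B \<kappa> \<sigma>). \<forall>A'\<in>dlim 1 (CUt m B) (phi m B \<kappa> \<sigma>).
         dl_induced 1 (CU m B) (phi m B \<kappa> \<sigma>) (dl_add 1 (CUt m B) (phi m B \<kappa> \<sigma>) A A')
         = dl_add 1 (CU m B) (phi m B \<kappa> \<sigma>)
             (dl_induced 1 (CU m B) (phi m B \<kappa> \<sigma>) A) (dl_induced 1 (CU m B) (phi m B \<kappa> \<sigma>) A')"
  proof (intro ballI)
    fix A A' assume A: "A \<in> dlim 1 (CUt m B) (phi m B \<kappa> \<sigma>)" and A': "A' \<in> dlim 1 (CUt m B) (phi m B \<kappa> \<sigma>)"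
    show "dl_induced 1 (CU m B) (phi m B \<kappa> \<sigma>) (dl_add 1 (CUt m B) (phi m B \<kappa> \<sigma>) A A')
         = dl_add 1 (CU m B) (phi m B \<kappa> \<sigma>)
             (dl_induced 1 (CU m B) (phi m B \<kappa> \<sigma>) A) (dl_induced 1 (CU m B) (phi m B \<kappa> \<sigma>) A')"
      by (rule dl_add_compat[OF HG phi_add phi_CUt phi_CU CUt_add CU_add A A'])
  qed
  show ?thesis using p1 p2 p3 by blast
qed

end
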